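(* Let $(X,T)$ be a minimal Cantor system with a sequence of CKR partitions satisfying (KR1)–(KR6), and let $\lambda\in\mathbb C$ with $|\lambda|=1$. (1) If $\lambda$ is a continuous eigenvalue of $(X,T)$, then $\sup_{1\le k\le C(n)}|\lambda^{h_k(n)}-1|\to0$ as $n\to\infty$. (2) If $$\sum_{m\ge1}\frac{\max_{1\le k\le C(m+1)}h_k(m+1)}{\min_{1\le k\le C(m)}h_k(m)}\ \max_{1\le k\le C(m)}|\lambda^{h_k(m)}-1|<\infty,$$ then $\lambda$ is a continuous eigenvalue of $(X,T)$.
   Context: CKR partitions $\mathcal P(n)=\{T^{-j}B_k(n):1\le k\le C(n),0\le j<h_k(n)\}$ (partitions of $X$, $B_k(n)$ clopen) with $\mathcal P(0)$ trivial, roof $B(n)=\bigcup_kB_k(n)$. (KR1) $B(n+1)\subseteq B(n)$; (KR2) $\mathcal P(n+1)$ refines $\mathcal P(n)$; (KR3) $\bigcap_nB(n)$ is a single point; (KR4) the partitions generate the topology; (KR5) for all $n\ge1$, $k\le C(n-1)$, $l\le C(n)$ some $0\le j<h_l(n)$ has $T^{-j}B_l(n)\subseteq B_k(n-1)$; (KR6) $B(n)\subseteq B_1(n-1)$ for $n\ge1$. A continuous eigenvalue is $\lambda$ with $f\circ T=\lambda f$ for some continuous nonzero $f:X\to\mathbb C$. *)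

theory Defs
  imports "HOL-Analysis.Analysis"
begin

text \<open>The phase space X is the whole of the (metrizable) type 'a.\<close>

definition cantor_space :: "'a::metric_space itself \<Rightarrow> bool" where
  "cantor_space _ \<longleftrightarrow> compact (UNIV :: 'a set) \<and> (UNIV :: 'a set) \<noteq> {}
     \<and> (\<forall>x::'a. connected_component_set UNIV x = {x})
     \<and> (\<forall>x::'a. x islimpt (UNIV :: 'a set))"

definition homeomorphism_map :: "('a::topological_space \<Rightarrow> 'a) \<Rightarrow> bool" where
  "homeomorphism_map T \<longleftrightarrow> bij T \<and> continuous_on UNIV T \<and> continuous_on UNIV (inv T)"

definition minimal_system :: "('a::topological_space \<Rightarrow> 'a) \<Rightarrow> bool" where
  "minimal_system T \<longleftrightarrow> (\<forall>A. closed A \<and> T ` A = A \<longrightarrow> A = {} \<or> A = UNIV)"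

definition minimal_cantor_system :: "('a::metric_space \<Rightarrow> 'a) \<Rightarrow> bool" where
  "minimal_cantor_system T \<longleftrightarrow> cantor_space TYPE('a) \<and> homeomorphism_map T \<and> minimal_system T"

definition atom :: "('a \<Rightarrow> 'a) \<Rightarrow> (nat \<Rightarrow> nat \<Rightarrow> 'a set) \<Rightarrow> nat \<Rightarrow> nat \<Rightarrow> nat \<Rightarrow> 'a set" where
  "atom T B n k j = (T ^^ j) -` B k n"

definition atom_index :: "(nat \<Rightarrow> nat) \<Rightarrow> (nat \<Rightarrow> nat \<Rightarrow> nat) \<Rightarrow> nat \<Rightarrow> (nat \<times> nat) set" where
  "atom_index C h n = {(k, j). 1 \<le> k \<and> k \<le> C n \<and> j < h k n}"

definition atoms :: "('a \<Rightarrow> 'a) \<Rightarrow> (nat \<Rightarrow> nat) \<Rightarrow> (nat \<Rightarrow> nat \<Rightarrow> nat) \<Rightarrow> (nat \<Rightarrow> nat \<Rightarrow> 'a set) \<Rightarrow> nat \<Rightarrow> 'a set set" where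
  "atoms T C h B n = (\<lambda>(k, j). atom T B n k j) ` atom_index C h n"

definition roof :: "(nat \<Rightarrow> nat) \<Rightarrow> (nat \<Rightarrow> nat \<Rightarrow> 'a set) \<Rightarrow> nat \<Rightarrow> 'a set" where
  "roof C B n = (\<Union>k\<in>{1..C n}. B k n)"

definition CKR_partition :: "('a::topological_space \<Rightarrow> 'a) \<Rightarrow> (nat \<Rightarrow> nat) \<Rightarrow> (nat \<Rightarrow> nat \<Rightarrow> nat) \<Rightarrow> (nat \<Rightarrow> nat \<Rightarrow> 'a set) \<Rightarrow> nat \<Rightarrow> bool" where
  "CKR_partition T C h B n \<longleftrightarrow>
     C n \<ge> 1
     \<and> (\<forall>k\<in>{1..C n}. h k n \<ge> 1 \<and> open (B k n) \<and> closed (B k n))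
     \<and> (\<forall>p\<in>atom_index C h n. atom T B n (fst p) (snd p) \<noteq> {})
     \<and> (\<forall>p\<in>atom_index C h n. \<forall>q\<in>atom_index C h n. p \<noteq> q \<longrightarrow>
            atom T B n (fst p) (snd p) \<inter> atom T B n (fst q) (snd q) = {})
     \<and> \<Union>(atoms T C h B n) = UNIV"

definition CKR_sequence :: "('a::topological_space \<Rightarrow> 'a) \<Rightarrow> (nat \<Rightarrow> nat) \<Rightarrow> (nat \<Rightarrow> nat \<Rightarrow> nat) \<Rightarrow> (nat \<Rightarrow> nat \<Rightarrow> 'a set) \<Rightarrow> bool" where
  "CKR_sequence T C h B \<longleftrightarrow>
     (\<forall>n. CKR_partition T C h B n)
     \<comment> \<open>P(0) trivial\<close>
     \<and> C 0 = 1 \<and> h 1 0 = 1 \<and> B 1 0 = UNIV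
     \<comment> \<open>KR1\<close>
     \<and> (\<forall>n. roof C B (Suc n) \<subseteq> roof C B n)
     \<comment> \<open>KR2\<close>
     \<and> (\<forall>n. \<forall>P\<in>atoms T C h B (Suc n). \<exists>Q\<in>atoms T C h B n. P \<subseteq> Q)
     \<comment> \<open>KR3\<close>
     \<and> (\<exists>x. (\<Inter>n. roof C B n) = {x})
     \<comment> \<open>KR4\<close>
     \<and> topological_basis (\<Union>n. atoms T C h B n)
     \<comment> \<open>KR5\<close>
     \<and> (\<forall>n\<ge>1. \<forall>k\<in>{1..C (n-1)}. \<forall>l\<in>{1..C n}. \<exists>j<h l n. atom T B n l j \<subseteq> B k (n-1))
     \<comment> \<open>KR6\<close>
     \<and> (\<forall>n\<ge>1. roof C B n \<subseteq> B 1 (n-1))"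

definition continuous_eigenvalue :: "('a::topological_space \<Rightarrow> 'a) \<Rightarrow> complex \<Rightarrow> bool" where
  "continuous_eigenvalue T c \<longleftrightarrow>
     (\<exists>f::'a \<Rightarrow> complex. continuous_on UNIV f \<and> (\<exists>x. f x \<noteq> 0) \<and> (\<forall>x. f (T x) = c * f x))"

end

theory Submission
  imports Defs
begin

definition tau :: "('a \<Rightarrow> 'a) \<Rightarrow> (nat \<Rightarrow> nat) \<Rightarrow> (nat \<Rightarrow> nat \<Rightarrow> 'a set) \<Rightarrow> nat \<Rightarrow> 'a \<Rightarrow> nat" where
  "tau T C B n x = (LEAST t. (T ^^ t) x \<in> roof C B n)"

definition minh :: "(nat \<Rightarrow> nat) \<Rightarrow> (nat \<Rightarrow> nat \<Rightarrow> nat) \<Rightarrow> nat \<Rightarrow> real" where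
  "minh C h n = real (Min ((\<lambda>k. h k n) ` {1..C n}))"

definition Mx :: "(nat \<Rightarrow> nat) \<Rightarrow> (nat \<Rightarrow> nat \<Rightarrow> nat) \<Rightarrow> complex \<Rightarrow> nat \<Rightarrow> real" where
  "Mx C h lam n = Max ((\<lambda>k. cmod (lam ^ h k n - 1)) ` {1..C n})"

definition maxh :: "(nat \<Rightarrow> nat) \<Rightarrow> (nat \<Rightarrow> nat \<Rightarrow> nat) \<Rightarrow> nat \<Rightarrow> real" where
  "maxh C h n = real (Max ((\<lambda>k. h k n) ` {1..C n}))"

context
  fixes T :: "'a::metric_space \<Rightarrow> 'a"
    and C :: "nat \<Rightarrow> nat" and h :: "nat \<Rightarrow> nat \<Rightarrow> nat" and B :: "nat \<Rightarrow> nat \<Rightarrow> 'a set"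
  assumes S: "CKR_sequence T C h B"
begin

lemma P: "CKR_partition T C h B n"
proof -
  have "\<forall>n. CKR_partition T C h B n" using S unfolding CKR_sequence_def by (rule conjunct1)
  then show ?thesis by blast
qed

lemma atom_disj:
  assumes "(k,j) \<in> atom_index C h n" "(k',j') \<in> atom_index C h n" "(k,j) \<noteq> (k',j')"
    "x \<in> atom T B n k j" "x \<in> atom T B n k' j'"
  shows False
proof -
  have D: "\<forall>p\<in>atom_index C h n. \<forall>q\<in>atom_index C h n. p \<noteq> q \<longrightarrow>
            atom T B n (fst p) (snd p) \<inter> atom T B n (fst q) (snd q) = {}"
    using P[of n] unfolding CKR_partition_def by blast
  have "atom T B n k j \<inter> atom T B n k' j' = {}"
    using D[rule_format, OF assms(1) assms(2) assms(3)] by simp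
  then show False using assms(4,5) by blast
qed

lemma cover: "\<exists>k j. (k,j) \<in> atom_index C h n \<and> x \<in> atom T B n k j"
proof -
  have "x \<in> \<Union>(atoms T C h B n)" using P[of n] unfolding CKR_partition_def by simp
  then show ?thesis unfolding atoms_def by auto
qed

lemma h_pos: "k \<in> {1..C n} \<Longrightarrow> h k n \<ge> 1"
proof -
  assume k: "k \<in> {1..C n}"
  have "\<forall>k\<in>{1..C n}. h k n \<ge> 1 \<and> open (B k n) \<and> closed (B k n)"
    using P[of n] unfolding CKR_partition_def by (elim conjE)
  then show ?thesis using k by simp
qed

lemma B_open: "k \<in> {1..C n} \<Longrightarrow> open (B k n)"
  and B_closed: "k \<in> {1..C n} \<Longrightarrow> closed (B k n)"
proof -
  assume k: "k \<in> {1..C n}"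
  have "\<forall>k\<in>{1..C n}. h k n \<ge> 1 \<and> open (B k n) \<and> closed (B k n)"
    using P[of n] unfolding CKR_partition_def by (elim conjE)
  then show "open (B k n)" "closed (B k n)" using k by simp_all
qed

lemma atom0: "atom T B n k 0 = B k n" by (simp add: atom_def)

lemma roof_iff: "x \<in> roof C B n \<longleftrightarrow> (\<exists>k\<in>{1..C n}. x \<in> B k n)"
  by (simp add: roof_def)

lemma atom_shift:
  assumes "x \<in> atom T B n k j" "t \<le> j"
  shows "(T ^^ t) x \<in> atom T B n k (j - t)"
proof -
  have "(T ^^ (j - t)) ((T ^^ t) x) = (T ^^ (j - t + t)) x" by (simp only: funpow_add o_apply)
  also have "j - t + t = j" using assms(2) by simp
  finally show ?thesis using assms(1) by (simp add: atom_def)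
qed

lemma not_roof:
  assumes "(k,j) \<in> atom_index C h n" "j > 0" "x \<in> atom T B n k j"
  shows "x \<notin> roof C B n"
proof
  assume "x \<in> roof C B n"
  then obtain k' where k': "k' \<in> {1..C n}" "x \<in> B k' n" by (auto simp: roof_iff)
  have "(k',0) \<in> atom_index C h n" using k'(1) h_pos[OF k'(1)] by (auto simp: atom_index_def)
  moreover have "x \<in> atom T B n k' 0" using k' by (simp add: atom0)
  moreover have "(k,j) \<noteq> (k',0)" using assms(2) by simp
  ultimately show False using atom_disj[OF assms(1), of k' 0 x] assms(3) by blast
qed

lemma tau_eq:
  assumes "(k,j) \<in> atom_index C h n" "x \<in> atom T B n k j"
  shows "tau T C B n x = j"
  unfolding tau_def
proof (rule Least_equality)
  have "k \<in> {1..C n}" using assms(1) by (auto simp: atom_index_def)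
  then show "(T ^^ j) x \<in> roof C B n" using assms(2) by (auto simp: roof_iff atom_def)
next
  fix t assume t: "(T ^^ t) x \<in> roof C B n"
  show "j \<le> t"
  proof (rule ccontr)
    assume "\<not> j \<le> t"
    then have "t < j" by simp
    have "(T ^^ t) x \<in> atom T B n k (j - t)" using atom_shift[OF assms(2)] \<open>t < j\<close> by simp
    moreover have "(k, j - t) \<in> atom_index C h n" using assms(1) by (auto simp: atom_index_def)
    ultimately show False using not_roof[of k "j - t" n "(T ^^ t) x"] t \<open>t < j\<close> by simp
  qed
qed

lemma tau_lt: "\<exists>k\<in>{1..C n}. tau T C B n x < h k n"
proof -
  obtain k j where "(k,j) \<in> atom_index C h n" "x \<in> atom T B n k j" using cover by blast
  then show ?thesis using tau_eq by (auto simp: atom_index_def)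
qed

lemma tau_ex: "\<exists>t. (T ^^ t) x \<in> roof C B n"
proof -
  obtain k j where "(k,j) \<in> atom_index C h n" "x \<in> atom T B n k j" using cover by blast
  then have "(T ^^ j) x \<in> roof C B n" by (auto simp: atom_index_def atom_def roof_iff)
  then show ?thesis by blast
qed

lemma tau_in: "(T ^^ tau T C B n x) x \<in> roof C B n"
  unfolding tau_def using tau_ex by (rule LeastI_ex)

lemma tau_le: "(T ^^ t) x \<in> roof C B n \<Longrightarrow> tau T C B n x \<le> t"
  unfolding tau_def by (rule Least_le)

lemma roof_closed: "closed (roof C B n)"
  unfolding roof_def by (intro closed_UN) (auto intro: B_closed)

lemma roof_open: "open (roof C B n)"
  unfolding roof_def by (intro open_UN) (auto intro: B_open)

lemma roof_Suc_all: "\<forall>n. roof C B (Suc n) \<subseteq> roof C B n"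
  using S unfolding CKR_sequence_def by (elim conjE) assumption

lemma roof_Suc: "roof C B (Suc n) \<subseteq> roof C B n"
  using roof_Suc_all by blast

lemma roof_dec: "n \<le> m \<Longrightarrow> roof C B m \<subseteq> roof C B n"
  by (rule lift_Suc_antimono_le[of "roof C B"]) (use roof_Suc in auto)

lemma next_base:
  assumes "y \<in> roof C B n"
  shows "\<exists>k\<in>{1..C n}. T y \<in> atom T B n k (h k n - 1)"
proof -
  obtain k j where kj: "(k,j) \<in> atom_index C h n" "T y \<in> atom T B n k j" using cover by blast
  have "j = h k n - 1"
  proof (rule ccontr)
    assume "j \<noteq> h k n - 1"
    then have "(k, Suc j) \<in> atom_index C h n" using kj(1) by (auto simp: atom_index_def)
    moreover have "y \<in> atom T B n k (Suc j)" using kj(2)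
      by (simp add: atom_def funpow_Suc_right del: funpow.simps)
    ultimately show False using not_roof assms by blast
  qed
  then show ?thesis using kj by (auto simp: atom_index_def)
qed

lemma tau_Suc:
  assumes "x \<notin> roof C B n"
  shows "tau T C B n x = Suc (tau T C B n (T x))"
proof -
  obtain t where t: "(T ^^ t) x \<in> roof C B n" using tau_ex by blast
  have "(LEAST t. (T ^^ t) x \<in> roof C B n) = Suc (LEAST m. (T ^^ Suc m) x \<in> roof C B n)"
    by (rule Least_Suc[of "\<lambda>t. (T ^^ t) x \<in> roof C B n", OF t]) (use assms in simp)
  then show ?thesis unfolding tau_def by (simp add: funpow_Suc_right del: funpow.simps)
qed

lemma prev_roof:
  assumes bij: "bij T" and k: "k \<in> {1..C n}"
  shows "\<exists>w\<in>roof C B n. (T ^^ h k n) w \<in> roof C B n"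
proof -
  have hk: "h k n \<ge> 1" using h_pos[OF k] .
  have idx: "(k, h k n - 1) \<in> atom_index C h n" using k hk by (auto simp: atom_index_def)
  have "\<forall>p\<in>atom_index C h n. atom T B n (fst p) (snd p) \<noteq> {}"
    using P[of n] unfolding CKR_partition_def by (elim conjE)
  from this[rule_format, OF idx] have "atom T B n k (h k n - 1) \<noteq> {}" by simp
  then obtain z where z: "z \<in> atom T B n k (h k n - 1)" by blast
  define w where "w = inv T z"
  have Tw: "T w = z" unfolding w_def using bij by (simp add: bij_is_surj surj_f_inv_f)
  obtain k' j' where kj: "(k',j') \<in> atom_index C h n" "w \<in> atom T B n k' j'" using cover by blast
  have "j' = 0"
  proof (rule ccontr)
    assume "j' \<noteq> 0"
    then have "(T ^^ 1) w \<in> atom T B n k' (j' - 1)" using atom_shift[OF kj(2), of 1] by simp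
    then have a: "z \<in> atom T B n k' (j' - 1)" using Tw by simp
    have i2: "(k', j' - 1) \<in> atom_index C h n" using kj(1) by (auto simp: atom_index_def)
    have "(k, h k n - 1) \<noteq> (k', j' - 1)" using kj(1) \<open>j' \<noteq> 0\<close> by (auto simp: atom_index_def)
    then show False using atom_disj[OF idx i2 _ z a] by blast
  qed
  then have "w \<in> roof C B n" using kj by (auto simp: atom_index_def atom_def roof_iff)
  moreover have "(T ^^ h k n) w \<in> roof C B n"
  proof -
    have "(T ^^ h k n) w = (T ^^ (Suc (h k n - 1))) w" using hk by simp
    also have "\<dots> = (T ^^ (h k n - 1)) (T w)" by (simp only: funpow_Suc_right o_apply)
    finally have "(T ^^ h k n) w = (T ^^ (h k n - 1)) (T w)" .
    then show ?thesis using z k Tw by (auto simp: atom_def roof_iff)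
  qed
  ultimately show ?thesis by blast
qed

lemma C_pos: "C n \<ge> 1"
  using P[of n] unfolding CKR_partition_def by (elim conjE)

lemma minh_ge1: "minh C h n \<ge> 1"
proof -
  have "Min ((\<lambda>k. h k n) ` {1..C n}) \<ge> 1"
    using C_pos[of n] h_pos[of _ n] by (subst Min_ge_iff) auto
  then show ?thesis unfolding minh_def by simp
qed

lemma h_ge_minh: "k \<in> {1..C n} \<Longrightarrow> real (h k n) \<ge> minh C h n"
  unfolding minh_def by simp

lemma h_le_maxh: "k \<in> {1..C n} \<Longrightarrow> real (h k n) \<le> maxh C h n"
  unfolding maxh_def by simp

lemma Mx_ge: "k \<in> {1..C n} \<Longrightarrow> cmod (lam ^ h k n - 1) \<le> Mx C h lam n"
  unfolding Mx_def by simp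

lemma Mx_nonneg: "0 \<le> Mx C h lam n"
proof -
  have "1 \<in> {1..C n}" using C_pos[of n] by simp
  from Mx_ge[OF this, of lam] show ?thesis using norm_ge_zero[of "lam ^ h 1 n - 1"] by linarith
qed

lemma norm_pow_sub: 
  fixes lam :: complex
  assumes "cmod lam = 1"
  shows "cmod (lam ^ (a + b) - 1) \<le> cmod (lam ^ a - 1) + cmod (lam ^ b - 1)"
proof -
  have "lam ^ (a + b) - 1 = lam ^ a * (lam ^ b - 1) + (lam ^ a - 1)" by (simp add: power_add algebra_simps)
  then have "cmod (lam ^ (a + b) - 1) \<le> cmod (lam ^ a * (lam ^ b - 1)) + cmod (lam ^ a - 1)"
    by (metis norm_triangle_ineq)
  also have "cmod (lam ^ a * (lam ^ b - 1)) = cmod (lam ^ b - 1)" using assms by (simp add: norm_mult norm_power)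
  finally show ?thesis by simp
qed

lemma D_bound:
  assumes lam: "cmod lam = 1"
  shows "y \<in> roof C B n \<Longrightarrow> (T ^^ d) y \<in> roof C B n
     \<Longrightarrow> cmod (lam ^ d - 1) \<le> real d / minh C h n * Mx C h lam n"
proof (induction d arbitrary: y rule: less_induct)
  case (less d)
  show ?case
  proof (cases "d = 0")
    case True then show ?thesis by simp
  next
    case False
    obtain k where k: "k \<in> {1..C n}" "T y \<in> atom T B n k (h k n - 1)"
      using next_base[OF less.prems(1)] by blast
    have hk: "h k n \<ge> 1" using h_pos[OF k(1)] .
    have idx: "(k, h k n - 1) \<in> atom_index C h n" using k hk by (auto simp: atom_index_def)
    have tt: "tau T C B n (T y) = h k n - 1" using tau_eq[OF idx k(2)] .
    have "(T ^^ (d - 1)) (T y) = (T ^^ d) y"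
    proof -
      have "(T ^^ d) y = (T ^^ Suc (d - 1)) y" using False by simp
      also have "\<dots> = (T ^^ (d - 1)) (T y)" by (simp only: funpow_Suc_right o_apply)
      finally show ?thesis by simp
    qed
    then have "tau T C B n (T y) \<le> d - 1" using tau_le less.prems(2) by metis
    then have ed: "h k n \<le> d" using tt hk False by linarith
    define y' where "y' = (T ^^ h k n) y"
    have "(T ^^ h k n) y = (T ^^ (h k n - 1)) (T y)"
    proof -
      have "(T ^^ h k n) y = (T ^^ Suc (h k n - 1)) y" using hk by simp
      also have "\<dots> = (T ^^ (h k n - 1)) (T y)" by (simp only: funpow_Suc_right o_apply)
      finally show ?thesis .
    qed
    then have y'r: "y' \<in> roof C B n" unfolding y'_def using tau_in[of n "T y"] tt by simp
    have "(T ^^ (d - h k n)) y' = (T ^^ (d - h k n + h k n)) y"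
      unfolding y'_def by (simp only: funpow_add o_apply)
    then have "(T ^^ (d - h k n)) y' \<in> roof C B n" using ed less.prems(2) by simp
    then have IH: "cmod (lam ^ (d - h k n) - 1) \<le> real (d - h k n) / minh C h n * Mx C h lam n"
      using less.IH[of "d - h k n" y'] y'r hk False by simp
    have m1: "minh C h n \<ge> 1" by (rule minh_ge1)
    have M0: "0 \<le> Mx C h lam n" by (rule Mx_nonneg)
    have "cmod (lam ^ h k n - 1) \<le> Mx C h lam n" by (rule Mx_ge[OF k(1)])
    also have "\<dots> \<le> real (h k n) / minh C h n * Mx C h lam n"
    proof -
      have "1 \<le> real (h k n) / minh C h n" using h_ge_minh[OF k(1)] m1 by simp
      then show ?thesis using M0 mult_right_mono[of 1 "real (h k n) / minh C h n" "Mx C h lam n"] by simp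
    qed
    finally have E: "cmod (lam ^ h k n - 1) \<le> real (h k n) / minh C h n * Mx C h lam n" .
    have "cmod (lam ^ d - 1) = cmod (lam ^ ((d - h k n) + h k n) - 1)" using ed by simp
    also have "\<dots> \<le> cmod (lam ^ (d - h k n) - 1) + cmod (lam ^ h k n - 1)" by (rule norm_pow_sub[OF lam])
    also have "\<dots> \<le> real (d - h k n) / minh C h n * Mx C h lam n + real (h k n) / minh C h n * Mx C h lam n"
      using IH E by simp
    also have "\<dots> = (real (d - h k n) + real (h k n)) / minh C h n * Mx C h lam n"
      by (simp add: add_divide_distrib distrib_right)
    also have "\<dots> = real d / minh C h n * Mx C h lam n"
      using ed by (simp add: of_nat_diff)
    finally show ?thesis .
  qed
qed

lemma incr:
  assumes lam: "cmod lam = 1"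
  shows "cmod (inverse lam ^ tau T C B (Suc n) x - inverse lam ^ tau T C B n x)
     \<le> maxh C h (Suc n) / minh C h n * Mx C h lam n"
proof -
  define i where "i = tau T C B n x"
  define j where "j = tau T C B (Suc n) x"
  have l0: "lam \<noteq> 0" using lam by auto
  have jr: "(T ^^ j) x \<in> roof C B n" unfolding j_def using tau_in[of "Suc n" x] roof_Suc by blast
  then have ij: "i \<le> j" unfolding i_def by (rule tau_le)
  have yr: "(T ^^ i) x \<in> roof C B n" unfolding i_def by (rule tau_in)
  have "(T ^^ (j - i)) ((T ^^ i) x) = (T ^^ (j - i + i)) x" by (simp only: funpow_add o_apply)
  then have "(T ^^ (j - i)) ((T ^^ i) x) \<in> roof C B n" using ij jr by simp
  from D_bound[OF lam yr this]
  have Db: "cmod (lam ^ (j - i) - 1) \<le> real (j - i) / minh C h n * Mx C h lam n" .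
  obtain l where l: "l \<in> {1..C (Suc n)}" "j < h l (Suc n)" using tau_lt[of "Suc n" x] unfolding j_def by blast
  have "real (j - i) \<le> maxh C h (Suc n)"
    using h_le_maxh[OF l(1)] l(2) by linarith
  then have "real (j - i) / minh C h n * Mx C h lam n \<le> maxh C h (Suc n) / minh C h n * Mx C h lam n"
    using minh_ge1[of n] Mx_nonneg[of lam n] by (intro mult_right_mono divide_right_mono) auto
  with Db have B1: "cmod (lam ^ (j - i) - 1) \<le> maxh C h (Suc n) / minh C h n * Mx C h lam n" by linarith
  have eq: "lam ^ j * (inverse lam ^ j - inverse lam ^ i) = - (lam ^ (j - i) - 1)"
    using l0 ij by (simp add: field_simps power_diff power_inverse)
  have "cmod (inverse lam ^ j - inverse lam ^ i) = cmod (lam ^ j * (inverse lam ^ j - inverse lam ^ i))"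
    using lam by (simp add: norm_mult norm_power)
  also have "\<dots> = cmod (lam ^ (j - i) - 1)" unfolding eq by (rule norm_minus_cancel)
  finally show ?thesis using B1 unfolding i_def j_def by simp
qed

lemma KR3: "\<exists>x0. (\<Inter>n. roof C B n) = {x0}"
  using S unfolding CKR_sequence_def by (elim conjE) assumption

lemma funpow_cont:
  assumes contT: "continuous_on UNIV T"
  shows "continuous_on UNIV (T ^^ j)"
proof (induction j)
  case 0 then show ?case by (simp add: continuous_on_id)
next
  case (Suc j)
  have "continuous_on UNIV (T \<circ> (T ^^ j))"
    by (rule continuous_on_compose[OF Suc]) (rule continuous_on_subset[OF contT], simp)
  then show ?case by simp
qed

lemma atom_open:
  assumes contT: "continuous_on UNIV T" and k: "k \<in> {1..C n}"
  shows "open (atom T B n k j)"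
  unfolding atom_def
  by (rule continuous_imp_open_vimage[OF funpow_cont[OF contT] open_UNIV B_open[OF k]]) simp

lemma fn_cont:
  assumes contT: "continuous_on UNIV T"
  shows "continuous_on UNIV (\<lambda>x. (c::complex) ^ tau T C B n x)"
  unfolding continuous_on_eq_continuous_at[OF open_UNIV]
proof
  fix x :: 'a
  obtain k j where kj: "(k,j) \<in> atom_index C h n" "x \<in> atom T B n k j" using cover by blast
  have k: "k \<in> {1..C n}" using kj(1) by (auto simp: atom_index_def)
  have "eventually (\<lambda>y. c ^ tau T C B n y = c ^ tau T C B n x) (at x)"
    unfolding eventually_at_topological
  proof (intro exI conjI ballI impI)
    show "open (atom T B n k j)" by (rule atom_open[OF contT k])
    show "x \<in> atom T B n k j" by (rule kj(2))
    fix y assume "y \<in> atom T B n k j"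
    then show "c ^ tau T C B n y = c ^ tau T C B n x" using tau_eq[OF kj(1)] kj(2) by simp
  qed
  then have "((\<lambda>y. c ^ tau T C B n y) \<longlongrightarrow> c ^ tau T C B n x) (at x)"
    by (rule tendsto_eventually)
  then show "isCont (\<lambda>x. c ^ tau T C B n x) x" by (simp add: continuous_at)
qed

lemma part2:
  assumes bij: "bij T" and contT: "continuous_on UNIV T"
    and limpt: "\<And>x. x islimpt (UNIV::'a set)"
    and lam: "cmod lam = 1"
    and summ: "summable (\<lambda>m. maxh C h (Suc (Suc m)) / minh C h (Suc m) * Mx C h lam (Suc m))"
  shows "continuous_eigenvalue T lam"
proof -
  define f where "f n x = inverse lam ^ tau T C B n x" for n x
  define g where "g i x = f (Suc (Suc i)) x - f (Suc i) x" for i x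
  define a where "a i = maxh C h (Suc (Suc i)) / minh C h (Suc i) * Mx C h lam (Suc i)" for i
  have l0: "lam \<noteq> 0" using lam by auto
  have gb: "norm (g i x) \<le> a i" for i x
    unfolding g_def f_def a_def using incr[OF lam, of "Suc i" x] by simp
  have suma: "summable a" using summ unfolding a_def .
  have UL: "uniform_limit UNIV (\<lambda>n x. \<Sum>i<n. g i x) (\<lambda>x. suminf (\<lambda>i. g i x)) sequentially"
    by (rule Weierstrass_m_test[OF gb suma])
  have fc: "continuous_on UNIV (f n)" for n
    unfolding f_def by (rule fn_cont[OF contT])
  have gc: "continuous_on UNIV (g i)" for i
    unfolding g_def by (intro continuous_on_diff fc)
  have sc: "continuous_on UNIV (\<lambda>x. suminf (\<lambda>i. g i x))"
    by (rule uniform_limit_theorem[OF _ UL]) (auto intro!: always_eventually continuous_on_sum gc)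
  define F where "F x = f 1 x + suminf (\<lambda>i. g i x)" for x
  have Fc: "continuous_on UNIV F" unfolding F_def by (intro continuous_on_add fc sc)
  have conv: "(\<lambda>N. f (Suc N) x) \<longlonglongrightarrow> F x" for x
  proof -
    have "summable (\<lambda>i. g i x)"
      by (rule summable_comparison_test[OF _ suma]) (use gb in auto)
    then have "(\<lambda>N. \<Sum>i<N. g i x) \<longlonglongrightarrow> suminf (\<lambda>i. g i x)"
      by (simp add: summable_LIMSEQ)
    then have "(\<lambda>N. f 1 x + (\<Sum>i<N. g i x)) \<longlonglongrightarrow> F x"
      unfolding F_def by (intro tendsto_add tendsto_const)
    moreover have "f 1 x + (\<Sum>i<N. g i x) = f (Suc N) x" for N
    proof -
      have "(\<Sum>i<N. g i x) = (\<Sum>i<N. f (Suc (Suc i)) x - f (Suc i) x)" unfolding g_def by simp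
      also have "\<dots> = f (Suc N) x - f (Suc 0) x"
        using sum_lessThan_telescope[of "\<lambda>n. f (Suc n) x" N] by simp
      finally show ?thesis by simp
    qed
    ultimately show ?thesis by simp
  qed
  have fn1: "cmod (f n x) = 1" for n x
    unfolding f_def using lam by (simp add: norm_power norm_inverse)
  have Fn: "cmod (F x) = 1" for x
  proof -
    have "(\<lambda>N. cmod (f (Suc N) x)) \<longlonglongrightarrow> cmod (F x)" by (rule tendsto_norm[OF conv])
    then have "(\<lambda>N. 1::real) \<longlonglongrightarrow> cmod (F x)" using fn1 by simp
    from LIMSEQ_unique[OF tendsto_const this] show ?thesis by simp
  qed
  obtain x0 where x0: "(\<Inter>n. roof C B n) = {x0}" using KR3 by blast
  have eig1: "F (T x) = lam * F x" if "x \<noteq> x0" for x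
  proof -
    have "x \<notin> (\<Inter>n. roof C B n)" using that x0 by simp
    then obtain N where N: "x \<notin> roof C B N" by blast
    have ev: "eventually (\<lambda>M. lam * f (Suc M) x = f (Suc M) (T x)) sequentially"
    proof (rule eventually_sequentiallyI[of N])
      fix M assume "N \<le> M"
      then have "x \<notin> roof C B (Suc M)" using N roof_dec[of N "Suc M"] by auto
      then have "tau T C B (Suc M) x = Suc (tau T C B (Suc M) (T x))" by (rule tau_Suc)
      then show "lam * f (Suc M) x = f (Suc M) (T x)"
        unfolding f_def using l0 by simp
    qed
    have "(\<lambda>M. lam * f (Suc M) x) \<longlonglongrightarrow> lam * F x" by (intro tendsto_mult tendsto_const conv)
    then have "(\<lambda>M. f (Suc M) (T x)) \<longlonglongrightarrow> lam * F x" using ev by (rule Lim_transform_eventually)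
    from LIMSEQ_unique[OF conv[of "T x"] this] show ?thesis .
  qed
  have cl: "closed {x. F (T x) = lam * F x}"
  proof (rule closed_Collect_eq)
    show "continuous_on UNIV (\<lambda>x. F (T x))"
      using continuous_on_compose[OF contT continuous_on_subset[OF Fc]] by (simp add: o_def)
    show "continuous_on UNIV (\<lambda>x. lam * F x)" by (intro continuous_on_mult continuous_on_const Fc)
  qed
  have "x0 islimpt (- {x0})" using limpt[of x0] unfolding islimpt_def by auto
  then have "x0 islimpt {x. F (T x) = lam * F x}" by (rule islimpt_subset) (use eig1 in auto)
  then have "F (T x0) = lam * F x0" using cl closed_limpt by blast
  then have eig: "F (T x) = lam * F x" for x using eig1 by (cases "x = x0") auto
  have "F undefined \<noteq> 0" using Fn[of undefined] by auto
  then show ?thesis unfolding continuous_eigenvalue_def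
    using Fc eig by blast
qed

lemma shrink:
  assumes cpt: "compact (UNIV::'a set)" and x0: "(\<Inter>n. roof C B n) = {x0}" and d: "d > 0"
  shows "\<exists>N. \<forall>n\<ge>N. \<forall>w\<in>roof C B n. dist w x0 < d"
proof (rule ccontr)
  assume neg: "\<not> ?thesis"
  define K where "K n = roof C B n - ball x0 d" for n
  have Kne: "K N \<noteq> {}" for N
  proof -
    have "\<forall>N. \<exists>n\<ge>N. \<exists>w\<in>roof C B n. \<not> dist w x0 < d" using neg by blast
    then obtain n w where nw: "n \<ge> N" "w \<in> roof C B n" "\<not> dist w x0 < d" by blast
    have "w \<in> roof C B N" using roof_dec[OF nw(1)] nw(2) by blast
    moreover have "w \<notin> ball x0 d" using nw(3) by (simp add: dist_commute)
    ultimately show ?thesis unfolding K_def by blast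
  qed
  have Kdec: "n \<le> m \<Longrightarrow> K m \<subseteq> K n" for n m unfolding K_def using roof_dec by blast
  have "UNIV \<inter> (\<Inter>i\<in>UNIV. K i) \<noteq> {}"
  proof (rule compact_imp_fip_image[OF cpt])
    show "closed (K i)" for i unfolding K_def by (intro closed_Diff roof_closed open_ball)
    fix I' :: "nat set" assume fin: "finite I'"
    show "UNIV \<inter> (\<Inter>i\<in>I'. K i) \<noteq> {}"
    proof (cases "I' = {}")
      case True then show ?thesis by simp
    next
      case False
      have "K (Max I') \<subseteq> (\<Inter>i\<in>I'. K i)" using Kdec Max_ge[OF fin] by blast
      then show ?thesis using Kne[of "Max I'"] by blast
    qed
  qed
  then obtain w where "\<forall>i. w \<in> K i" by blast
  then have "w \<in> (\<Inter>n. roof C B n)" "w \<notin> ball x0 d" unfolding K_def by auto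
  then show False using x0 d by simp
qed

lemma part1:
  assumes bij: "bij T" and contT: "continuous_on UNIV T"
    and cpt: "compact (UNIV::'a set)" and minl: "minimal_system T"
    and lam: "cmod lam = 1"
    and ev: "continuous_eigenvalue T lam"
  shows "Mx C h lam \<longlonglongrightarrow> 0"
proof -
  obtain f :: "'a \<Rightarrow> complex" where fc: "continuous_on UNIV f" and fx: "\<exists>x. f x \<noteq> 0"
    and fT: "\<And>x. f (T x) = lam * f x"
    using ev unfolding continuous_eigenvalue_def by blast
  obtain x1 where x1: "f x1 \<noteq> 0" using fx by blast
  define c where "c = cmod (f x1)"
  have c0: "c > 0" unfolding c_def using x1 by simp
  have nT: "cmod (f (T x)) = cmod (f x)" for x using lam by (simp add: fT norm_mult)
  define A where "A = {x. cmod (f x) = c}"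
  have Acl: "closed A" unfolding A_def
    by (rule closed_Collect_eq) (auto intro: continuous_on_norm fc continuous_on_const)
  have "T ` A = A"
  proof
    show "T ` A \<subseteq> A" unfolding A_def using nT by auto
    show "A \<subseteq> T ` A"
    proof
      fix x assume xA: "x \<in> A"
      have Tx: "T (inv T x) = x" using bij by (simp add: bij_is_surj surj_f_inv_f)
      then have "inv T x \<in> A" using xA nT[of "inv T x"] unfolding A_def by simp
      then show "x \<in> T ` A" using Tx by (metis imageI)
    qed
  qed
  then have "A = {} \<or> A = UNIV" using minl Acl unfolding minimal_system_def by blast
  moreover have "x1 \<in> A" unfolding A_def c_def by simp
  ultimately have Au: "A = UNIV" by blast
  have fc_all: "cmod (f x) = c" for x using Au unfolding A_def by blast
  have fTm: "f ((T ^^ m) w) = lam ^ m * f w" for m w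
    by (induction m) (simp_all add: fT)
  have uc: "uniformly_continuous_on UNIV f" by (rule compact_uniformly_continuous[OF fc cpt])
  obtain x0 where x0: "(\<Inter>n. roof C B n) = {x0}" using KR3 by blast
  show ?thesis
  proof (rule LIMSEQ_I)
    fix r :: real assume r: "r > 0"
    obtain dl where dl: "dl > 0" and dlp: "\<And>x x'. dist x' x < dl \<Longrightarrow> dist (f x') (f x) < r * c"
      using uc c0 r unfolding uniformly_continuous_on_def by (metis UNIV_I mult_pos_pos)
    obtain N where N: "\<forall>n\<ge>N. \<forall>w\<in>roof C B n. dist w x0 < dl / 2"
      using shrink[OF cpt x0, of "dl/2"] dl by auto
    have "norm (Mx C h lam n - 0) < r" if n: "n \<ge> N" for n
    proof -
      have each: "cmod (lam ^ h k n - 1) < r" if k: "k \<in> {1..C n}" for k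
      proof -
        obtain w where w: "w \<in> roof C B n" "(T ^^ h k n) w \<in> roof C B n"
          using prev_roof[OF bij k] by blast
        have "dist ((T ^^ h k n) w) w < dl"
          using N n w dist_triangle_half_r[of x0 "(T ^^ h k n) w" dl w]
          by (metis dist_commute dist_triangle_half_l)
        then have "dist (f ((T ^^ h k n) w)) (f w) < r * c" by (rule dlp)
        moreover have "dist (f ((T ^^ h k n) w)) (f w) = cmod (lam ^ h k n - 1) * c"
        proof -
          have "f ((T ^^ h k n) w) - f w = (lam ^ h k n - 1) * f w" by (simp add: fTm algebra_simps)
          then show ?thesis by (simp add: dist_norm norm_mult fc_all)
        qed
        ultimately show ?thesis using c0 by simp
      qed
      have "Mx C h lam n < r" unfolding Mx_def
        using C_pos[of n] each by (subst Max_less_iff) auto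
      then show ?thesis using Mx_nonneg[of lam n] by simp
    qed
    then show "\<exists>N. \<forall>n\<ge>N. norm (Mx C h lam n - 0) < r" by blast
  qed
qed

end


theorem mainTheorem9:
  fixes T :: "'a::metric_space \<Rightarrow> 'a"
    and C :: "nat \<Rightarrow> nat" and h :: "nat \<Rightarrow> nat \<Rightarrow> nat" and B :: "nat \<Rightarrow> nat \<Rightarrow> 'a set"
    and lam :: complex
  assumes "minimal_cantor_system T"
    and "CKR_sequence T C h B"
    and "cmod lam = 1"
  shows "(continuous_eigenvalue T lam \<longrightarrow>
            (\<lambda>n. Max ((\<lambda>k. cmod (lam ^ h k n - 1)) ` {1..C n})) \<longlonglongrightarrow> 0)
       \<and> (summable (\<lambda>m. (real (Max ((\<lambda>k. h k (Suc m + 1)) ` {1..C (Suc m + 1)}))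
                          / real (Min ((\<lambda>k. h k (Suc m)) ` {1..C (Suc m)})))
                         * Max ((\<lambda>k. cmod (lam ^ h k (Suc m) - 1)) ` {1..C (Suc m)}))
            \<longrightarrow> continuous_eigenvalue T lam)"
proof -
  have cs: "cantor_space TYPE('a)" and hm: "homeomorphism_map T" and mn: "minimal_system T"
    using assms(1) unfolding minimal_cantor_system_def by auto
  have cpt: "compact (UNIV::'a set)" and lp: "\<And>x::'a. x islimpt UNIV"
    using cs unfolding cantor_space_def by auto
  have bij: "bij T" and contT: "continuous_on UNIV T" using hm unfolding homeomorphism_map_def by auto
  have e1: "(\<lambda>n. Max ((\<lambda>k. cmod (lam ^ h k n - 1)) ` {1..C n})) = Mx C h lam"
    by (simp add: Mx_def fun_eq_iff)
  have e2: "(\<lambda>m. (real (Max ((\<lambda>k. h k (Suc m + 1)) ` {1..C (Suc m + 1)}))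
                          / real (Min ((\<lambda>k. h k (Suc m)) ` {1..C (Suc m)})))
                         * Max ((\<lambda>k. cmod (lam ^ h k (Suc m) - 1)) ` {1..C (Suc m)}))
      = (\<lambda>m. maxh C h (Suc (Suc m)) / minh C h (Suc m) * Mx C h lam (Suc m))"
    by (simp add: Mx_def maxh_def minh_def fun_eq_iff)
  show ?thesis
    unfolding e1 e2
    using part1[OF assms(2) bij contT cpt mn assms(3)] part2[OF assms(2) bij contT lp assms(3)]
    by blast
qed

end
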